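(* Let $(\Omega,\mathcal F,P)$ be a probability space and let $(X_x)_{x\in\mathbb{R}}$ be a jointly measurable family of non-negative random variables which are identically distributed and non-trivial (i.e. $P(X_x>0)>0$). Let $f:\mathbb{R}\to[0,\infty)$ be measurable. If $P\big(\int_{\mathbb{R}} f(x)X_x\,dx<\infty\big)=1$, then $\int_{\mathbb{R}} f(x)\,dx<\infty$. *)

theory Defs
  imports "HOL-Probability.Probability"
begin

end

theory Submission
  imports Defs
begin

theorem lemma1:
  fixes M :: "'a measure" and X :: "real \<Rightarrow> 'a \<Rightarrow> real" and f :: "real \<Rightarrow> real"
  assumes "prob_space M"
    and joint: "(\<lambda>(x, \<omega>). X x \<omega>) \<in> borel_measurable (lborel \<Otimes>\<^sub>M M)"
    and nonneg: "\<And>x \<omega>. \<omega> \<in> space M \<Longrightarrow> X x \<omega> \<ge> 0"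
    and ident: "\<And>x y. distr M borel (X x) = distr M borel (X y)"
    and nontriv: "\<And>x. measure M {\<omega> \<in> space M. X x \<omega> > 0} > 0"
    and f_meas: "f \<in> borel_measurable borel"
    and f_nonneg: "\<And>x. f x \<ge> 0"
    and fin: "measure M {\<omega> \<in> space M. (\<integral>\<^sup>+ x. ennreal (f x * X x \<omega>) \<partial>lborel) < \<infinity>} = 1"
  shows "(\<integral>\<^sup>+ x. ennreal (f x) \<partial>lborel) < \<infinity>"
proof -
  interpret P: prob_space M by fact
  interpret PS: pair_sigma_finite lborel M
    by (simp add: pair_sigma_finite_def lborel.sigma_finite_measure_axioms P.sigma_finite_measure_axioms)
  have Xm: "X x \<in> borel_measurable M" for x
  proof -
    have "(\<lambda>\<omega>. (\<lambda>(x, \<omega>). X x \<omega>) (x, \<omega>)) \<in> borel_measurable M"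
    proof -
      have "Pair x \<in> measurable M (lborel \<Otimes>\<^sub>M M)" by (rule measurable_Pair1') simp
      from measurable_compose[OF this joint] show ?thesis by simp
    qed
    thus ?thesis by simp
  qed
  have Xs[measurable]: "(\<lambda>(\<omega>, x). X x \<omega>) \<in> borel_measurable (M \<Otimes>\<^sub>M lborel)"
  proof -
    have "(\<lambda>(x, y). (\<lambda>(x, \<omega>). X x \<omega>) (y, x)) \<in> borel_measurable (M \<Otimes>\<^sub>M lborel)"
      by (rule measurable_pair_swap[OF joint])
    thus ?thesis by (simp only: case_prod_conv split_beta' fst_conv snd_conv)
  qed
  note f_meas[measurable]
  have jointS[measurable]: "(\<lambda>(\<omega>, x). ennreal (f x * X x \<omega>)) \<in> borel_measurable (M \<Otimes>\<^sub>M lborel)"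
    by measurable
  define Y where "Y \<omega> = (\<integral>\<^sup>+ x. ennreal (f x * X x \<omega>) \<partial>lborel)" for \<omega>
  have Ym: "Y \<in> borel_measurable M"
    unfolding Y_def using lborel.borel_measurable_nn_integral[of "\<lambda>\<omega> x. ennreal (f x * X x \<omega>)" M] jointS
    by simp
  obtain c where c: "c > 0" "measure M {\<omega> \<in> space M. X 0 \<omega> > c} > 0"
  proof (rule ccontr)
    assume "\<not> thesis"
    with that have z: "measure M {\<omega> \<in> space M. X 0 \<omega> > 1 / real (Suc n)} = 0" for n
    proof -
      have "\<not> measure M {\<omega> \<in> space M. X 0 \<omega> > 1 / real (Suc n)} > 0"
        using that[of "1 / real (Suc n)"] \<open>\<not> thesis\<close> by auto
      thus ?thesis using measure_nonneg[of M "{\<omega> \<in> space M. X 0 \<omega> > 1 / real (Suc n)}"] by linarith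
    qed
    have "{\<omega> \<in> space M. X 0 \<omega> > 0} = (\<Union>n. {\<omega> \<in> space M. X 0 \<omega> > 1 / real (Suc n)})"
    proof safe
      fix \<omega> assume "\<omega> \<in> space M" "X 0 \<omega> > 0"
      then obtain n where "1 / real (Suc n) < X 0 \<omega>"
        using nat_approx_posE[of "X 0 \<omega>"] by (metis inverse_eq_divide)
      thus "\<omega> \<in> (\<Union>n. {\<omega> \<in> space M. X 0 \<omega> > 1 / real (Suc n)})" using \<open>\<omega> \<in> space M\<close> by blast
    next
      fix \<omega> n assume "\<omega> \<in> space M" "1 / real (Suc n) < X 0 \<omega>"
      moreover have "0 < 1 / real (Suc n)" by simp
      ultimately show "0 < X 0 \<omega>" by linarith
    qed
    moreover have "(\<Union>n. {\<omega> \<in> space M. X 0 \<omega> > 1 / real (Suc n)}) \<in> null_sets M"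
      apply (rule null_sets_UN)
      using z Xm[of 0] by (simp add: P.emeasure_eq_measure null_sets_def)
    ultimately show False using nontriv[of 0]
      by (simp add: measure_def null_setsD1)
  qed
  define p where "p = measure M {\<omega> \<in> space M. X 0 \<omega> > c}"
  have pp: "p > 0" using c p_def by simp
  have Ap: "measure M {\<omega> \<in> space M. X x \<omega> > c} = p" for x
  proof -
    have "measure M {\<omega> \<in> space M. X x \<omega> > c} = measure (distr M borel (X x)) {c<..}"
      using Xm[of x] by (subst measure_distr) (auto simp: vimage_def Int_def conj_commute)
    also have "\<dots> = measure (distr M borel (X 0)) {c<..}" by (simp add: ident[of x 0])
    also have "\<dots> = p"
      using Xm[of 0] p_def by (subst measure_distr) (auto simp: vimage_def Int_def conj_commute)
    finally show ?thesis .
  qed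
  define B where "B n = {\<omega> \<in> space M. Y \<omega> \<le> of_nat n}" for n :: nat
  have Bs: "B n \<in> sets M" for n unfolding B_def using Ym by measurable
  have "(\<lambda>n. measure M (B n)) \<longlonglongrightarrow> measure M (\<Union>n. B n)"
  proof (rule P.finite_Lim_measure_incseq)
    show "range B \<subseteq> sets M" using Bs by auto
    show "incseq B" by (auto simp: incseq_def B_def intro: order_trans)
  qed
  moreover have "(\<Union>n. B n) = {\<omega> \<in> space M. Y \<omega> < \<infinity>}"
  proof safe
    fix \<omega> n assume "\<omega> \<in> B n"
    thus "\<omega> \<in> space M" by (simp add: B_def)
    have "Y \<omega> \<le> of_nat n" using \<open>\<omega> \<in> B n\<close> by (simp add: B_def)
    also have "(of_nat n :: ennreal) < \<infinity>" using of_nat_less_top by simp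
    finally show "Y \<omega> < \<infinity>" .
  next
    fix \<omega> assume "\<omega> \<in> space M" "Y \<omega> < \<infinity>"
    then obtain n where "Y \<omega> < of_nat n" using ennreal_Ex_less_of_nat[of "Y \<omega>"] by auto
    thus "\<omega> \<in> (\<Union>n. B n)" using \<open>\<omega> \<in> space M\<close> unfolding B_def by (auto intro!: less_imp_le)
  qed
  ultimately have "(\<lambda>n. measure M (B n)) \<longlonglongrightarrow> 1" using fin by (simp add: Y_def)
  then obtain K where K: "measure M (B K) > 1 - p / 2"
    using order_tendstoD(1)[of _ 1 sequentially "1 - p/2"] pp
  proof -
    assume r: "\<And>K. measure M (B K) > 1 - p / 2 \<Longrightarrow> thesis"
    have "eventually (\<lambda>n. measure M (B n) > 1 - p/2) sequentially"
      using order_tendstoD(1)[OF \<open>(\<lambda>n. measure M (B n)) \<longlonglongrightarrow> 1\<close>, of "1 - p/2"] pp by simp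
    then show thesis using r by (auto simp: eventually_sequentially)
  qed
  have AB: "measure M ({\<omega> \<in> space M. X x \<omega> > c} \<inter> B K) \<ge> p / 2" for x
  proof -
    let ?A = "{\<omega> \<in> space M. X x \<omega> > c}"
    have As: "?A \<in> sets M" using Xm[of x] by measurable
    have "?A \<subseteq> (?A \<inter> B K) \<union> (space M - B K)" by auto
    hence "measure M ?A \<le> measure M ((?A \<inter> B K) \<union> (space M - B K))"
      using As Bs by (intro P.finite_measure_mono) auto
    also have "\<dots> \<le> measure M (?A \<inter> B K) + measure M (space M - B K)"
      using As Bs by (intro measure_subadditive) (auto simp: P.emeasure_eq_measure)
    finally have "measure M ?A \<le> measure M (?A \<inter> B K) + measure M (space M - B K)" .
    moreover have "measure M (space M - B K) = 1 - measure M (B K)"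
      using Bs P.prob_compl by blast
    ultimately show ?thesis using Ap[of x] K by linarith
  qed
  have "(\<integral>\<^sup>+ \<omega>. (\<integral>\<^sup>+ x. indicator (B K) \<omega> * ennreal (f x * X x \<omega>) \<partial>lborel) \<partial>M) \<le> (\<integral>\<^sup>+ \<omega>. of_nat K \<partial>M)"
  proof (rule nn_integral_mono)
    fix \<omega> assume "\<omega> \<in> space M"
    show "(\<integral>\<^sup>+ x. indicator (B K) \<omega> * ennreal (f x * X x \<omega>) \<partial>lborel) \<le> of_nat K"
      by (cases "\<omega> \<in> B K") (auto simp: B_def Y_def nn_integral_cmult)
  qed
  also have "\<dots> = of_nat K" by (simp add: P.emeasure_space_1)
  finally have up: "(\<integral>\<^sup>+ \<omega>. (\<integral>\<^sup>+ x. indicator (B K) \<omega> * ennreal (f x * X x \<omega>) \<partial>lborel) \<partial>M) \<le> of_nat K" .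
  have jointB: "(\<lambda>(x, \<omega>). indicator (B K) \<omega> * ennreal (f x * X x \<omega>)) \<in> borel_measurable (lborel \<Otimes>\<^sub>M M)"
  proof -
    have "(\<lambda>(\<omega>, x). indicator (B K) \<omega> * ennreal (f x * X x \<omega>)) \<in> borel_measurable (M \<Otimes>\<^sub>M lborel)"
      using jointS Bs by (simp add: case_prod_beta)
    from measurable_pair_swap[OF this] show ?thesis by (simp add: case_prod_beta)
  qed
  have "(\<integral>\<^sup>+ x. ennreal (c * (p/2)) * ennreal (f x) \<partial>lborel)
     \<le> (\<integral>\<^sup>+ x. (\<integral>\<^sup>+ \<omega>. indicator (B K) \<omega> * ennreal (f x * X x \<omega>) \<partial>M) \<partial>lborel)"
  proof (rule nn_integral_mono)
    fix x :: real
    let ?A = "{\<omega> \<in> space M. X x \<omega> > c}"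
    have As: "?A \<in> sets M" using Xm[of x] by measurable
    have "ennreal (c * (p/2)) * ennreal (f x) \<le> ennreal (f x * c) * emeasure M (?A \<inter> B K)"
    proof -
      have r: "c * (p/2) * f x \<le> f x * c * measure M (?A \<inter> B K)"
        using mult_right_mono[OF AB[of x], of "c * f x"] c f_nonneg[of x] by (simp add: algebra_simps)
      have "ennreal (c * (p/2)) * ennreal (f x) = ennreal (c * (p/2) * f x)"
        using c pp f_nonneg[of x] by (subst ennreal_mult[symmetric]) auto
      also have "\<dots> \<le> ennreal (f x * c * measure M (?A \<inter> B K))" using r by (rule ennreal_leI)
      also have "\<dots> = ennreal (f x * c) * emeasure M (?A \<inter> B K)"
        using c f_nonneg[of x] by (simp add: ennreal_mult P.emeasure_eq_measure)
      finally show ?thesis .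
    qed
    also have "\<dots> = (\<integral>\<^sup>+ \<omega>. ennreal (f x * c) * indicator (?A \<inter> B K) \<omega> \<partial>M)"
      using As Bs by (simp add: nn_integral_cmult_indicator)
    also have "\<dots> \<le> (\<integral>\<^sup>+ \<omega>. indicator (B K) \<omega> * ennreal (f x * X x \<omega>) \<partial>M)"
    proof (rule nn_integral_mono)
      fix \<omega> assume "\<omega> \<in> space M"
      show "ennreal (f x * c) * indicator (?A \<inter> B K) \<omega> \<le> indicator (B K) \<omega> * ennreal (f x * X x \<omega>)"
        using f_nonneg[of x] \<open>\<omega> \<in> space M\<close>
        by (auto simp: indicator_def intro!: ennreal_leI mult_left_mono)
    qed
    finally show "ennreal (c * (p/2)) * ennreal (f x) \<le> (\<integral>\<^sup>+ \<omega>. indicator (B K) \<omega> * ennreal (f x * X x \<omega>) \<partial>M)" .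
  qed
  also have "\<dots> = (\<integral>\<^sup>+ \<omega>. (\<integral>\<^sup>+ x. indicator (B K) \<omega> * ennreal (f x * X x \<omega>) \<partial>lborel) \<partial>M)"
    using PS.Fubini'[OF jointB] by simp
  also have "\<dots> \<le> of_nat K" by (rule up)
  finally have fin2: "ennreal (c * (p/2)) * (\<integral>\<^sup>+ x. ennreal (f x) \<partial>lborel) \<le> of_nat K"
    by (simp add: nn_integral_cmult)
  have "ennreal (c * (p/2)) > 0" using c pp by simp
  show ?thesis
  proof (rule ccontr)
    assume "\<not> ?thesis"
    hence I: "(\<integral>\<^sup>+ x. ennreal (f x) \<partial>lborel) = \<top>" by (simp add: not_less top_unique)
    have "ennreal (c * (p/2)) \<noteq> 0" using c pp by simp
    hence "ennreal (c * (p/2)) * (\<integral>\<^sup>+ x. ennreal (f x) \<partial>lborel) = \<top>"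
      unfolding I by (simp add: ennreal_mult_eq_top_iff)
    hence "(\<top>::ennreal) \<le> of_nat K" using fin2 by simp
    hence "(of_nat K::ennreal) = \<top>" by (rule top_unique[THEN iffD1])
    thus False using of_nat_less_top[of K] by simp
  qed
qed

end
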